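(* For $n\geq 1$, let $B_n(y,t)=\sum_{\sigma\in\mathcal{B}_n}y^{\mathsf{neg}\,\sigma}t^{\mathsf{des}_B\,\sigma}$. Then $$B_n(y, t)=(1+yt)^nP^{(\mathsf{cpk}, \mathsf{exc})}\left(\mathfrak{S}_n; \frac{(1+y)^2t}{(y+t)(1+yt)}, \frac{y+t}{1+yt}\right),$$ equivalently, $$P^{(\mathsf{cpk},\mathsf{exc})}\left(\mathfrak{S}_n; y,t\right)=\frac{1}{(1+uv)^{n}}B_{n}(u,v),$$ where $u=\frac{1+t^{2}-2yt-(1-t)\sqrt{(1+t)^{2}-4yt}}{2(1-y)t}$ and $v=\frac{(1+t)^{2}-2yt-(1+t)\sqrt{(1+t)^{2}-4yt}}{2yt}$.
   Context: $\mathcal{B}_n$ is the set of permutations $\sigma$ of $\{\pm1,\dots,\pm n\}$ with $\sigma(-i)=-\sigma(i)$; $\mathsf{neg}\,\sigma=\#\{i\in[n]:\sigma(i)<0\}$; $\mathsf{des}_B\,\sigma=\#\{i\in\{0,\dots,n-1\}:\sigma(i)>\sigma(i+1)\}$ with $\sigma(0)=0$ and the natural order. $\mathfrak{S}_n$ is the set of permutations of $[n]$; $P^{(\mathsf{cpk},\mathsf{exc})}(\mathfrak{S}_n;a,b)=\sum_{\sigma\in\mathfrak{S}_n}a^{\mathsf{cpk}\,\sigma}b^{\mathsf{exc}\,\sigma}$, where $\mathsf{exc}\,\sigma=\#\{i:\sigma(i)>i\}$ and $\mathsf{cpk}\,\sigma=\#\{x\in[n]:\sigma^{-1}(x)<x>\sigma(x)\}$.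 *)

theory Defs
  imports "HOL-Analysis.Analysis" "HOL-Combinatorics.Permutations"
begin

definition signed_perms :: "nat \<Rightarrow> (int \<Rightarrow> int) set" where
  "signed_perms n = {\<sigma>. \<sigma> permutes {i::int. i \<noteq> 0 \<and> \<bar>i\<bar> \<le> int n} \<and> (\<forall>i. \<sigma> (- i) = - \<sigma> i)}"

definition negB :: "nat \<Rightarrow> (int \<Rightarrow> int) \<Rightarrow> nat" where
  "negB n \<sigma> = card {i::int. 1 \<le> i \<and> i \<le> int n \<and> \<sigma> i < 0}"

text \<open>Type B descents, with \<open>\<sigma>(0) = 0\<close> (automatic, as 0 is fixed).\<close>
definition desB :: "nat \<Rightarrow> (int \<Rightarrow> int) \<Rightarrow> nat" where
  "desB n \<sigma> = card {i::int. 0 \<le> i \<and> i < int n \<and> \<sigma> i > \<sigma> (i + 1)}"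

definition Bpoly :: "nat \<Rightarrow> real \<Rightarrow> real \<Rightarrow> real" where
  "Bpoly n y t = (\<Sum>\<sigma>\<in>signed_perms n. y ^ negB n \<sigma> * t ^ desB n \<sigma>)"

definition exc :: "nat \<Rightarrow> (nat \<Rightarrow> nat) \<Rightarrow> nat" where
  "exc n \<sigma> = card {i. 1 \<le> i \<and> i \<le> n \<and> \<sigma> i > i}"

definition cpk :: "nat \<Rightarrow> (nat \<Rightarrow> nat) \<Rightarrow> nat" where
  "cpk n \<sigma> = card {x. 1 \<le> x \<and> x \<le> n \<and> inv \<sigma> x < x \<and> \<sigma> x < x}"

definition P_cpk_exc :: "nat \<Rightarrow> real \<Rightarrow> real \<Rightarrow> real" where
  "P_cpk_exc n a b = (\<Sum>\<sigma>\<in>{\<sigma>. \<sigma> permutes {1..n}}. a ^ cpk n \<sigma> * b ^ exc n \<sigma>)"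

end

theory Submission
  imports Defs
begin

definition pkq :: "(nat \<Rightarrow> nat) \<Rightarrow> nat \<Rightarrow> bool" where
  "pkq q x \<longleftrightarrow> inv q x < x \<and> q x < x"

lemma cpk_pkq: "cpk n q = card {x\<in>{1..n}. pkq q x}"
  unfolding cpk_def pkq_def by (rule arg_cong[where f=card]) auto

lemma ins_facts:
  assumes q: "q permutes {1..n}" and b: "b \<in> {1..n}"
  defines "z \<equiv> inv q b" and "s \<equiv> Transposition.transpose (Suc n) b \<circ> q"
  shows "s z = (Suc n)" "s (Suc n) = b" "\<And>x. x \<noteq> z \<Longrightarrow> x \<noteq> (Suc n) \<Longrightarrow> s x = q x"
    "inv s b = (Suc n)" "inv s (Suc n) = z" "\<And>x. x \<noteq> b \<Longrightarrow> x \<noteq> (Suc n) \<Longrightarrow> inv s x = inv q x"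
    "s permutes {1..Suc n}" "z \<in> {1..n}" "q z = b" "q (Suc n) = (Suc n)" "inv q (Suc n) = (Suc n)"
proof -
  have qN: "q (Suc n) = (Suc n)" using permutes_not_in[OF q] by (simp)
  have qz: "q z = b" unfolding z_def using permutes_inverses(1)[OF q] .
  have zin: "z \<in> {1..n}" unfolding z_def using permutes_in_image[OF permutes_inv[OF q]] b by simp
  have bN: "b \<noteq> (Suc n)" using b by (simp)
  have sp: "s permutes {1..Suc n}"
    unfolding s_def
    apply (rule permutes_compose)
     apply (rule permutes_subset[OF q]) apply auto[1]
    apply (rule permutes_swap_id) using b by auto
  show "s z = (Suc n)" "s (Suc n) = b" using qz qN bN by (auto simp: s_def)
  show sx: "\<And>x. x \<noteq> z \<Longrightarrow> x \<noteq> (Suc n) \<Longrightarrow> s x = q x"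
  proof -
    fix x assume "x \<noteq> z" "x \<noteq> (Suc n)"
    then have "q x \<noteq> b" "q x \<noteq> (Suc n)"
      using qz qN permutes_inj[OF q] by (metis injD)+
    then show "s x = q x" by (simp add: s_def transpose_apply_other)
  qed
  show "inv s b = (Suc n)" "inv s (Suc n) = z"
    using permutes_inv_eq[OF sp] \<open>s z = (Suc n)\<close> \<open>s (Suc n) = b\<close> by auto
  show "\<And>x. x \<noteq> b \<Longrightarrow> x \<noteq> (Suc n) \<Longrightarrow> inv s x = inv q x"
  proof -
    fix x assume x: "x \<noteq> b" "x \<noteq> (Suc n)"
    have "inv q x \<noteq> z" using x permutes_inv_eq[OF q] qz by (metis z_def)
    moreover have "inv q x \<noteq> (Suc n)" using x permutes_inv_eq[OF q] qN by metis
    ultimately have "s (inv q x) = x" using sx permutes_inverses(1)[OF q] by simp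
    then show "inv s x = inv q x" using permutes_inv_eq[OF sp] by simp
  qed
  show "s permutes {1..Suc n}" "z \<in> {1..n}" "q z = b" "q (Suc n) = (Suc n)" by fact+
  show "inv q (Suc n) = (Suc n)" using permutes_inv_eq[OF q] qN by simp
qed

lemma ins_stats:
  assumes q: "q permutes {1..n}" and b: "b \<in> {1..n}"
  defines "z \<equiv> inv q b" and "s \<equiv> Transposition.transpose (Suc n) b \<circ> q"
  shows "cpk (Suc n) s + of_bool (pkq q z) + of_bool (pkq q b) = cpk n q + 1"
    "exc (Suc n) s = exc n q + (if z < b then 0 else 1)"
    "pkq q b \<Longrightarrow> z < b" "pkq q z \<Longrightarrow> b < z"
proof -
  note F0 = ins_facts[OF q b, folded z_def s_def]
  have zb: "inv q b = z" by (simp add: z_def)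
  note F = F0 zb
  show "pkq q b \<Longrightarrow> z < b" "pkq q z \<Longrightarrow> b < z" using F unfolding pkq_def by auto
  let ?S = "{x\<in>{1..n}. pkq q x}"
  have eq: "{x\<in>{1..Suc n}. pkq s x} = insert (Suc n) (?S - {z,b})"
  proof (intro set_eqI iffI)
    fix x assume x: "x \<in> {x\<in>{1..Suc n}. pkq s x}"
    show "x \<in> insert (Suc n) (?S - {z,b})"
    proof (cases "x = Suc n")
      case False
      then have "x \<in> {1..n}" using x by auto
      moreover have "x \<noteq> z" using x F(1) False unfolding pkq_def by auto
      moreover have "x \<noteq> b" using x F(4) False unfolding pkq_def by auto
      ultimately show ?thesis using x F(3,6) False unfolding pkq_def by auto
    qed simp
  next
    fix x assume x: "x \<in> insert (Suc n) (?S - {z,b})"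
    show "x \<in> {x\<in>{1..Suc n}. pkq s x}"
    proof (cases "x = Suc n")
      case True
      then show ?thesis using F b unfolding pkq_def by auto
    next
      case False
      then show ?thesis using x F(3,6) unfolding pkq_def by auto
    qed
  qed
  have fin: "finite ?S" by simp
  have c1: "card (?S - {z,b}) = card ?S - card (?S \<inter> {z,b})"
    by (rule card_Diff_subset_Int) simp
  have c2: "card (?S \<inter> {z,b}) = of_bool (pkq q z) + of_bool (pkq q b)"
  proof -
    have "\<not> (pkq q z \<and> pkq q b)" using F unfolding pkq_def by auto
    moreover have "z \<noteq> b \<or> \<not> pkq q z" using F unfolding pkq_def by auto
    ultimately show ?thesis using F(8) b by (auto simp: Int_insert_right)
  qed
  have c3: "card (?S \<inter> {z,b}) \<le> card ?S" by (rule card_mono) auto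
  show "cpk (Suc n) s + of_bool (pkq q z) + of_bool (pkq q b) = cpk n q + 1"
    unfolding cpk_pkq eq using c1 c2 c3 by (simp add: card_insert_if)
  have eq2: "{i. 1 \<le> i \<and> i \<le> Suc n \<and> s i > i} = insert z {i. 1 \<le> i \<and> i \<le> n \<and> q i > i}"
  proof (intro set_eqI iffI)
    fix x assume x: "x \<in> {i. 1 \<le> i \<and> i \<le> Suc n \<and> s i > i}"
    then show "x \<in> insert z {i. 1 \<le> i \<and> i \<le> n \<and> q i > i}"
      using F b by (cases "x = Suc n"; cases "x = z") auto
  next
    fix x assume x: "x \<in> insert z {i. 1 \<le> i \<and> i \<le> n \<and> q i > i}"
    then show "x \<in> {i. 1 \<le> i \<and> i \<le> Suc n \<and> s i > i}"
      using F b by (cases "x = Suc n"; cases "x = z") auto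
  qed
  show "exc (Suc n) s = exc n q + (if z < b then 0 else 1)"
    unfolding exc_def eq2 using F by (simp add: card_insert_if)
qed

lemma stats_id:
  assumes q: "q permutes {1..n}"
  shows "cpk (Suc n) q = cpk n q" "exc (Suc n) q = exc n q"
proof -
  have qN: "q (Suc n) = Suc n" using permutes_not_in[OF q] by simp
  have "inv q (Suc n) = Suc n" using permutes_inv_eq[OF q] qN by simp
  have "{x\<in>{1..Suc n}. pkq q x} = {x\<in>{1..n}. pkq q x}"
    using qN unfolding pkq_def by (auto simp: le_Suc_eq)
  then show "cpk (Suc n) q = cpk n q" unfolding cpk_pkq by simp
  have "{i. 1 \<le> i \<and> i \<le> Suc n \<and> q i > i} = {i. 1 \<le> i \<and> i \<le> n \<and> q i > i}"
    using qN by (auto simp: le_Suc_eq)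
  then show "exc (Suc n) q = exc n q" unfolding exc_def by simp
qed

lemma card_of_bool_sum:
  "(\<Sum>x\<in>{1..n::nat}. (of_bool (P x) :: real)) = real (card {x\<in>{1..n}. P x})"
proof -
  have "{1..n} \<inter> {x. P x} = {x\<in>{1..n}. P x}" by blast
  moreover have "(\<Sum>x\<in>{1..n::nat}. (of_bool (P x) :: real)) = real (card ({1..n} \<inter> {x. P x}))"
    by simp
  ultimately show ?thesis by simp
qed

lemma sum_lin4:
  fixes f g h :: "nat \<Rightarrow> real"
  shows "(\<Sum>x\<in>{1..n}. k + f x * c1 + g x * c2 + (h x - f x) * c3)
    = n * k + sum f {1..n} * c1 + sum g {1..n} * c2 + (sum h {1..n} - sum f {1..n}) * c3"
  by (simp add: sum.distrib sum_subtractf sum_distrib_right left_diff_distrib)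

lemma m_sum:
  fixes a \<beta> :: real
  assumes q: "q permutes {1..n}"
  shows "(\<Sum>b\<in>{1..n}. (if pkq q b then 1 else if pkq q (inv q b) then \<beta> else if inv q b < b then a else a * \<beta>) :: real)
     = n * a * \<beta> + cpk n q * (1 - a * \<beta>) + (real (exc n q) - cpk n q) * (a - a * \<beta>) + cpk n q * (\<beta> - a * \<beta>)"
proof -
  have pz: "pkq q b \<Longrightarrow> inv q b < b" for b unfolding pkq_def by auto
  have pz2: "pkq q (inv q b) \<Longrightarrow> \<not> inv q b < b" for b
    unfolding pkq_def using permutes_inverses(1)[OF q] by auto
  have m: "(if pkq q b then 1 else if pkq q (inv q b) then \<beta> else if inv q b < b then a else a * \<beta>)
     = a * \<beta> + of_bool (pkq q b) * (1 - a * \<beta>) + of_bool (pkq q (inv q b)) * (\<beta> - a * \<beta>)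
       + (of_bool (inv q b < b) - of_bool (pkq q b)) * (a - a * \<beta>)" for b
    using pz[of b] pz2[of b] by (cases "pkq q b"; cases "pkq q (inv q b)"; cases "inv q b < b") (simp_all add: algebra_simps)
  have bij: "bij_betw q {1..n} {1..n}" "bij_betw (inv q) {1..n} {1..n}"
    using permutes_imp_bij[OF q] permutes_imp_bij[OF permutes_inv[OF q]] by auto
  have s1: "(\<Sum>b\<in>{1..n}. (of_bool (pkq q b) :: real)) = cpk n q"
    unfolding cpk_pkq by (rule card_of_bool_sum)
  have s2: "(\<Sum>b\<in>{1..n}. (of_bool (pkq q (inv q b)) :: real)) = cpk n q"
    using sum.reindex_bij_betw[OF bij(2), of "\<lambda>x. (of_bool (pkq q x) :: real)"] s1 by simp
  have s3: "(\<Sum>b\<in>{1..n}. (of_bool (inv q b < b) :: real)) = exc n q"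
  proof -
    have "(\<Sum>b\<in>{1..n}. (of_bool (inv q b < b) :: real)) = (\<Sum>i\<in>{1..n}. (of_bool (inv q (q i) < q i) :: real))"
      using sum.reindex_bij_betw[OF bij(1), of "\<lambda>b. (of_bool (inv q b < b) :: real)"] by simp
    also have "\<dots> = (\<Sum>i\<in>{1..n}. (of_bool (i < q i) :: real))"
      using permutes_inverses(2)[OF q] by simp
    also have "\<dots> = exc n q" unfolding card_of_bool_sum exc_def
      by (rule arg_cong[where f="\<lambda>A. real (card A)"]) auto
    finally show ?thesis .
  qed
  have "(\<Sum>b\<in>{1..n}. (if pkq q b then 1 else if pkq q (inv q b) then \<beta> else if inv q b < b then a else a * \<beta>))
     = (\<Sum>b\<in>{1..n}. a * \<beta> + of_bool (pkq q b) * (1 - a * \<beta>) + of_bool (pkq q (inv q b)) * (\<beta> - a * \<beta>)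
       + (of_bool (inv q b < b) - of_bool (pkq q b)) * (a - a * \<beta>))"
    by (rule sum.cong[OF refl m])
  also have "\<dots> = n * (a * \<beta>) + (\<Sum>b\<in>{1..n}. of_bool (pkq q b)) * (1 - a * \<beta>) + (\<Sum>b\<in>{1..n}. of_bool (pkq q (inv q b))) * (\<beta> - a * \<beta>)
       + ((\<Sum>b\<in>{1..n}. of_bool (inv q b < b)) - (\<Sum>b\<in>{1..n}. of_bool (pkq q b))) * (a - a * \<beta>)"
    by (rule sum_lin4)
  also have "\<dots> = n * a * \<beta> + cpk n q * (1 - a * \<beta>) + (real (exc n q) - cpk n q) * (a - a * \<beta>) + cpk n q * (\<beta> - a * \<beta>)"
    unfolding s1 s2 s3 by simp
  finally show ?thesis .
qed

lemma term_b:
  fixes a \<beta> :: real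
  assumes q: "q permutes {1..n}" and b: "b \<in> {1..n}"
  shows "a ^ cpk (Suc n) (Transposition.transpose (Suc n) b \<circ> q) * \<beta> ^ exc (Suc n) (Transposition.transpose (Suc n) b \<circ> q)
    = a ^ cpk n q * \<beta> ^ exc n q * (if pkq q b then 1 else if pkq q (inv q b) then \<beta> else if inv q b < b then a else a * \<beta>)"
proof -
  note S = ins_stats[OF q b]
  show ?thesis
  proof (cases "pkq q b")
    case True
    then have "\<not> pkq q (inv q b)" "inv q b < b" using S(3,4) by force+
    then show ?thesis using S(1,2) True by simp
  next
    case F1: False
    show ?thesis
    proof (cases "pkq q (inv q b)")
      case True
      then have "\<not> inv q b < b" using S(4) by force
      then show ?thesis using S(1,2) True F1 by simp
    next
      case False
      then have "cpk (Suc n) (Transposition.transpose (Suc n) b \<circ> q) = Suc (cpk n q)" using S(1) F1 by simp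
      then show ?thesis using S(2) False F1 by (simp add: ac_simps)
    qed
  qed
qed

lemma P_rec:
  fixes a \<beta> :: real
  shows "P_cpk_exc (Suc n) a \<beta> = (\<Sum>q\<in>{q. q permutes {1..n}}. a ^ cpk n q * \<beta> ^ exc n q *
     (1 + n * a * \<beta> + cpk n q * (1 - a) * (1 + \<beta>) + exc n q * a * (1 - \<beta>)))"
proof -
  have ins: "{1..Suc n} = insert (Suc n) {1..n}" by auto
  let ?f = "\<lambda>s. a ^ cpk (Suc n) s * \<beta> ^ exc (Suc n) s"
  have "P_cpk_exc (Suc n) a \<beta> = (\<Sum>b\<in>insert (Suc n) {1..n}. \<Sum>q\<in>{p. p permutes {1..n}}. ?f (Transposition.transpose (Suc n) b \<circ> q))"
    unfolding P_cpk_exc_def ins by (rule sum_over_permutations_insert) auto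
  also have "\<dots> = (\<Sum>q\<in>{p. p permutes {1..n}}. \<Sum>b\<in>insert (Suc n) {1..n}. ?f (Transposition.transpose (Suc n) b \<circ> q))"
    by (rule sum.swap)
  also have "\<dots> = (\<Sum>q\<in>{p. p permutes {1..n}}. a ^ cpk n q * \<beta> ^ exc n q *
     (1 + n * a * \<beta> + cpk n q * (1 - a) * (1 + \<beta>) + exc n q * a * (1 - \<beta>)))"
  proof (rule sum.cong[OF refl])
    fix q assume "q \<in> {p. p permutes {1..n}}"
    then have q: "q permutes {1..n}" by simp
    have "(\<Sum>b\<in>insert (Suc n) {1..n}. ?f (Transposition.transpose (Suc n) b \<circ> q))
        = ?f q + (\<Sum>b\<in>{1..n}. ?f (Transposition.transpose (Suc n) b \<circ> q))"
      by (simp add: sum.insert)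
    also have "\<dots> = a ^ cpk n q * \<beta> ^ exc n q + (\<Sum>b\<in>{1..n}. a ^ cpk n q * \<beta> ^ exc n q *
        (if pkq q b then 1 else if pkq q (inv q b) then \<beta> else if inv q b < b then a else a * \<beta>))"
      using stats_id[OF q] term_b[OF q] by simp
    also have "\<dots> = a ^ cpk n q * \<beta> ^ exc n q * (1 + (\<Sum>b\<in>{1..n}.
        (if pkq q b then 1 else if pkq q (inv q b) then \<beta> else if inv q b < b then a else a * \<beta>)))"
      by (simp add: sum_distrib_left distrib_left)
    also have "\<dots> = a ^ cpk n q * \<beta> ^ exc n q *
     (1 + n * a * \<beta> + cpk n q * (1 - a) * (1 + \<beta>) + exc n q * a * (1 - \<beta>))"
      unfolding m_sum[OF q] by (simp add: algebra_simps)
    finally show "(\<Sum>b\<in>insert (Suc n) {1..n}. ?f (Transposition.transpose (Suc n) b \<circ> q)) = \<dots>" .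
  qed
  finally show ?thesis .
qed

definition SW :: "nat \<Rightarrow> int list set" where
  "SW n = {w. length w = n \<and> distinct (map abs w) \<and> set (map abs w) = {1..int n}}"

fun des0 :: "int \<Rightarrow> int list \<Rightarrow> nat" where
  "des0 p [] = 0"
| "des0 p (x # xs) = (if x < p then 1 else 0) + des0 x xs"

definition negL :: "int list \<Rightarrow> nat" where
  "negL w = length (filter (\<lambda>x. x < 0) w)"

definition insL :: "nat \<Rightarrow> int \<Rightarrow> int list \<Rightarrow> int list" where
  "insL j x w = take j w @ x # drop j w"

lemma insL_length[simp]: "length (insL j x w) = Suc (length w)"
  unfolding insL_def by simp

lemma insL_nth: "j \<le> length w \<Longrightarrow> insL j x w ! j = x"
  unfolding insL_def by (simp add: nth_append)

lemma insL_take: "j \<le> length w \<Longrightarrow> take j (insL j x w) = take j w"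
  unfolding insL_def by simp

lemma insL_drop: "j \<le> length w \<Longrightarrow> drop (Suc j) (insL j x w) = drop j w"
  unfolding insL_def by simp

lemma map_insL: "map f (insL j x w) = insL j (f x) (map f w)"
  unfolding insL_def by (simp add: take_map drop_map)

lemma set_insL: "set (insL j x w) = insert x (set w)"
proof -
  have "set (take j w) \<union> set (drop j w) = set w" by (metis set_append append_take_drop_id)
  then show ?thesis unfolding insL_def by auto
qed

lemma distinct_insL: "distinct (insL j x w) \<longleftrightarrow> x \<notin> set w \<and> distinct w"
proof -
  have d: "distinct w \<longleftrightarrow> distinct (take j w) \<and> distinct (drop j w) \<and> set (take j w) \<inter> set (drop j w) = {}"
    using distinct_append[of "take j w" "drop j w"] by (simp only: append_take_drop_id)
  have st: "set w = set (take j w) \<union> set (drop j w)" by (metis set_append append_take_drop_id)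
  show ?thesis unfolding insL_def distinct_append d st by auto
qed

lemma insL_Cons0: "insL 0 x w = x # w" unfolding insL_def by simp
lemma insL_Cons_Suc: "insL (Suc j) x (y # w) = y # insL j x w" unfolding insL_def by simp

lemma negL_insL: "negL (insL j x w) = negL w + (if x < 0 then 1 else 0)"
proof -
  have "length (filter (\<lambda>x. x < 0) w) = length (filter (\<lambda>x. x < 0) (take j w)) + length (filter (\<lambda>x. x < 0) (drop j w))"
    by (metis append_take_drop_id filter_append length_append)
  then show ?thesis unfolding negL_def insL_def by simp
qed

lemma des_ins:
  assumes "\<forall>x\<in>set w. \<bar>x\<bar> < N" "\<bar>p\<bar> < N" "j \<le> length w"
  shows "des0 p (insL j N w) = des0 p w + (if j < length w then (if w ! j < (p # w) ! j then 0 else 1) else 0)"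
    and "des0 p (insL j (-N) w) = des0 p w + (if j < length w then (if w ! j < (p # w) ! j then 0 else 1) else 1)"
  using assms
proof (induction w arbitrary: p j)
  case Nil
  { case 1 then show ?case by (simp add: insL_def) }
  { case 2 then show ?case by (simp add: insL_def) }
next
  case (Cons y ys)
  { case 1
    show ?case
    proof (cases j)
      case 0
      then show ?thesis using 1 by (cases ys) (auto simp: insL_Cons0)
    next
      case (Suc j')
      then show ?thesis using 1 Cons.IH(1)[of y j'] by (auto simp: insL_Cons_Suc)
    qed }
  { case 2
    show ?case
    proof (cases j)
      case 0
      then show ?thesis using 2 by (cases ys) (auto simp: insL_Cons0)
    next
      case (Suc j')
      then show ?thesis using 2 Cons.IH(2)[of y j'] by (auto simp: insL_Cons_Suc)
    qed }
qed

lemma des0_sum: "des0 p w = (\<Sum>j<length w. if w ! j < (p # w) ! j then 1 else 0)"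
proof (induction w arbitrary: p)
  case Nil then show ?case by simp
next
  case (Cons x xs)
  show ?case unfolding length_Cons sum.lessThan_Suc_shift using Cons.IH[of x] by simp
qed

lemma slot_sum_aux:
  fixes t :: real
  shows "(\<Sum>j<length w. (if w ! j < (0 # w) ! j then 1 else t)) = length w * t + des0 0 w * (1 - t)"
proof -
  have "(\<Sum>j<length w. (if w ! j < (0 # w) ! j then 1 else t))
      = (\<Sum>j<length w. t + (if w ! j < (0 # w) ! j then 1 else 0) * (1 - t))"
    by (rule sum.cong) auto
  also have "\<dots> = length w * t + (\<Sum>j<length w. (if w ! j < (0 # w) ! j then 1 else 0)) * (1 - t)"
    by (simp add: sum.distrib sum_distrib_right)
  also have "(\<Sum>j<length w. (if w ! j < (0 # w) ! j then 1 else 0) :: real) = real (des0 0 w)"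
    unfolding des0_sum[of 0 w] of_nat_sum by (rule sum.cong) auto
  finally show ?thesis .
qed

lemma slot_sum:
  fixes t :: real
  assumes "\<forall>x\<in>set w. \<bar>x\<bar> < N" "0 < N"
  shows "(\<Sum>j\<in>{0..length w}. t ^ des0 0 (insL j N w)) = t ^ des0 0 w * (length w * t + des0 0 w * (1 - t) + 1)"
    and "(\<Sum>j\<in>{0..length w}. t ^ des0 0 (insL j (-N) w)) = t ^ des0 0 w * (length w * t + des0 0 w * (1 - t) + t)"
proof -
  have I: "{0..length w} = insert (length w) {..<length w}" by auto
  have A: "(\<Sum>j<length w. t ^ des0 0 (insL j N w)) = t ^ des0 0 w * (length w * t + des0 0 w * (1 - t))"
  proof -
    have "(\<Sum>j<length w. t ^ des0 0 (insL j N w)) = (\<Sum>j<length w. t ^ des0 0 w * (if w ! j < (0 # w) ! j then 1 else t))"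
      by (rule sum.cong) (use des_ins(1)[OF assms(1), of 0] assms(2) in auto)
    then show ?thesis by (simp add: slot_sum_aux flip: sum_distrib_left)
  qed
  have B: "(\<Sum>j<length w. t ^ des0 0 (insL j (-N) w)) = t ^ des0 0 w * (length w * t + des0 0 w * (1 - t))"
  proof -
    have "(\<Sum>j<length w. t ^ des0 0 (insL j (-N) w)) = (\<Sum>j<length w. t ^ des0 0 w * (if w ! j < (0 # w) ! j then 1 else t))"
      by (rule sum.cong) (use des_ins(2)[OF assms(1), of 0] assms(2) in auto)
    then show ?thesis by (simp add: slot_sum_aux flip: sum_distrib_left)
  qed
  show "(\<Sum>j\<in>{0..length w}. t ^ des0 0 (insL j N w)) = t ^ des0 0 w * (length w * t + des0 0 w * (1 - t) + 1)"
    unfolding I using A des_ins(1)[OF assms(1), of 0 "length w"] assms(2) by (simp add: algebra_simps)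
  show "(\<Sum>j\<in>{0..length w}. t ^ des0 0 (insL j (-N) w)) = t ^ des0 0 w * (length w * t + des0 0 w * (1 - t) + t)"
    unfolding I using B des_ins(2)[OF assms(1), of 0 "length w"] assms(2) by (simp add: algebra_simps)
qed

lemma SW_elem:
  assumes "w \<in> SW n"
  shows "length w = n" "distinct (map abs w)" "set (map abs w) = {1..int n}"
    "\<And>x. x \<in> set w \<Longrightarrow> \<bar>x\<bar> < int (Suc n)"
proof -
  show "length w = n" "distinct (map abs w)" "set (map abs w) = {1..int n}"
    using assms unfolding SW_def by auto
  fix x assume "x \<in> set w"
  then have "\<bar>x\<bar> \<in> set (map abs w)" by simp
  then show "\<bar>x\<bar> < int (Suc n)" using \<open>set (map abs w) = {1..int n}\<close> by auto
qed

lemma ins_in_SW: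
  assumes w: "w \<in> SW n" and j: "j \<le> n" and s: "\<bar>s\<bar> = int (Suc n)"
  shows "insL j s w \<in> SW (Suc n)"
proof -
  note W = SW_elem[OF w]
  have m: "map abs (insL j s w) = insL j (int (Suc n)) (map abs w)" unfolding map_insL s ..
  have nn: "int (Suc n) \<notin> set (map abs w)" using W(3) by auto
  have "distinct (map abs (insL j s w))" unfolding m distinct_insL using nn W(2) by simp
  moreover have "set (map abs (insL j s w)) = {1..int (Suc n)}" unfolding m set_insL W(3) by auto
  ultimately show ?thesis unfolding SW_def using W(1) by simp
qed

lemma SW_bij:
  "bij_betw (\<lambda>(w,j,s). insL j s w) (SW n \<times> ({0..n} \<times> {int (Suc n), - int (Suc n)})) (SW (Suc n))"
proof (rule bij_betwI')
  fix X Y assume X: "X \<in> SW n \<times> ({0..n} \<times> {int (Suc n), - int (Suc n)})"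
    and Y: "Y \<in> SW n \<times> ({0..n} \<times> {int (Suc n), - int (Suc n)})"
  obtain w j s where Xe: "X = (w, j, s)" by (cases X) auto
  obtain w' j' s' where Ye: "Y = (w', j', s')" by (cases Y) auto
  have w: "w \<in> SW n" "j \<le> n" "\<bar>s\<bar> = int (Suc n)" using X Xe by auto
  have w': "w' \<in> SW n" "j' \<le> n" "\<bar>s'\<bar> = int (Suc n)" using Y Ye by auto
  show "((\<lambda>(w,j,s). insL j s w) X = (\<lambda>(w,j,s). insL j s w) Y) = (X = Y)"
  proof
    assume eq: "(\<lambda>(w,j,s). insL j s w) X = (\<lambda>(w,j,s). insL j s w) Y"
    define L where "L = insL j s w"
    have L': "L = insL j' s' w'" using eq Xe Ye L_def by simp
    have lw: "length w = n" "length w' = n" using SW_elem(1) w(1) w'(1) by auto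
    have LS: "L \<in> SW (Suc n)" using ins_in_SW[OF w] L_def by simp
    have dL: "distinct (map abs L)" using SW_elem(2)[OF LS] .
    have lL: "length L = Suc n" using L_def lw by simp
    have a1: "map abs L ! j = int (Suc n)" using L_def insL_nth[of j w s] w lw by simp
    have a2: "map abs L ! j' = int (Suc n)" using L' insL_nth[of j' w' s'] w' lw by simp
    have jj: "j = j'" using nth_eq_iff_index_eq[OF dL, of j j'] a1 a2 lL w(2) w'(2) by simp
    have ss: "s = s'" using L_def L' insL_nth[of j w s] insL_nth[of j' w' s'] w w' lw jj by simp
    have "w = take j L @ drop (Suc j) L" using L_def insL_take[of j w s] insL_drop[of j w s] w lw by simp
    moreover have "w' = take j L @ drop (Suc j) L" using L' insL_take[of j' w' s'] insL_drop[of j' w' s'] w' lw jj by simp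
    ultimately show "X = Y" using Xe Ye jj ss by simp
  qed simp
next
  fix X assume X: "X \<in> SW n \<times> ({0..n} \<times> {int (Suc n), - int (Suc n)})"
  obtain w j s where Xe: "X = (w, j, s)" by (cases X) auto
  have w: "w \<in> SW n" "j \<le> n" "\<bar>s\<bar> = int (Suc n)" using X Xe by auto
  show "(\<lambda>(w,j,s). insL j s w) X \<in> SW (Suc n)" using ins_in_SW[OF w] Xe by simp
next
  fix L assume LS: "L \<in> SW (Suc n)"
  note LL = SW_elem[OF LS]
  have "int (Suc n) \<in> set (map abs L)" using LL(3) by simp
  then obtain j where j: "j < length (map abs L)" "map abs L ! j = int (Suc n)"
    by (metis in_set_conv_nth)
  define w where "w = take j L @ drop (Suc j) L"
  have jl: "j < length L" "j \<le> length w" using j by (auto simp: w_def)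
  have Lw: "L = insL j (L ! j) w"
    unfolding insL_def w_def using jl by (simp add: min_def id_take_nth_drop[symmetric])
  have lw: "length w = n" using LL(1) jl by (simp add: w_def)
  have M: "map abs L = insL j (int (Suc n)) (map abs w)"
    using Lw j by (metis map_insL nth_map jl(1))
  have dw: "distinct (map abs w)" "int (Suc n) \<notin> set (map abs w)"
    using LL(2) unfolding M distinct_insL by auto
  have sw: "set (map abs w) = {1..int n}"
  proof -
    have "insert (int (Suc n)) (set (map abs w)) = {1..int (Suc n)}"
      using LL(3) unfolding M set_insL .
    then have "set (map abs w) = {1..int (Suc n)} - {int (Suc n)}" using dw(2) by (metis Diff_insert_absorb)
    then show ?thesis by auto
  qed
  have "w \<in> SW n" unfolding SW_def using lw dw sw by simp
  moreover have "\<bar>L ! j\<bar> = int (Suc n)" using j by simp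
  ultimately have "(w, j, L ! j) \<in> SW n \<times> ({0..n} \<times> {int (Suc n), - int (Suc n)})"
    using jl LL(1) by (auto simp: abs_if split: if_splits)
  then show "\<exists>X\<in>SW n \<times> ({0..n} \<times> {int (Suc n), - int (Suc n)}). L = (\<lambda>(w,j,s). insL j s w) X"
    using Lw by force
qed

lemma sum_prod3: "(\<Sum>X\<in>A \<times> (B \<times> C). G X) = (\<Sum>a\<in>A. \<Sum>b\<in>B. \<Sum>c\<in>C. G (a,b,c))"
proof -
  have "(\<Sum>X\<in>A \<times> (B \<times> C). G X) = (\<Sum>a\<in>A. \<Sum>Y\<in>B \<times> C. G (a,Y))"
    using sum.cartesian_product[of "\<lambda>a Y. G (a,Y)" "B \<times> C" A] by simp
  also have "\<dots> = (\<Sum>a\<in>A. \<Sum>b\<in>B. \<Sum>c\<in>C. G (a,b,c))"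
    by (rule sum.cong[OF refl]) (use sum.cartesian_product[of "\<lambda>b c. G (_,b,c)" C B] in simp)
  finally show ?thesis .
qed

lemma SW_sum:
  fixes g :: "int list \<Rightarrow> real"
  shows "sum g (SW (Suc n)) = (\<Sum>w\<in>SW n. \<Sum>j\<in>{0..n}. g (insL j (int (Suc n)) w) + g (insL j (- int (Suc n)) w))"
proof -
  have "sum g (SW (Suc n)) = (\<Sum>X\<in>SW n \<times> ({0..n} \<times> {int (Suc n), - int (Suc n)}). g ((\<lambda>(w,j,s). insL j s w) X))"
    using sum.reindex_bij_betw[OF SW_bij[of n], of g] by simp
  also have "\<dots> = (\<Sum>w\<in>SW n. \<Sum>j\<in>{0..n}. \<Sum>s\<in>{int (Suc n), - int (Suc n)}. g (insL j s w))"
    unfolding sum_prod3 by simp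
  also have "\<dots> = (\<Sum>w\<in>SW n. \<Sum>j\<in>{0..n}. g (insL j (int (Suc n)) w) + g (insL j (- int (Suc n)) w))"
    by simp
  finally show ?thesis .
qed

abbreviation SS :: "nat \<Rightarrow> int set" where "SS n \<equiv> {i::int. i \<noteq> 0 \<and> \<bar>i\<bar> \<le> int n}"

lemma upto_facts:
  "length [1..int n] = n" "\<And>k. k < n \<Longrightarrow> [1..int n] ! k = 1 + int k" "set [1..int n] = {1..int n}"
  "distinct [1..int n]"
  by (auto simp: nth_upto)

lemma sp_facts:
  assumes "\<sigma> \<in> signed_perms n"
  shows "\<sigma> permutes SS n" "\<And>i. \<sigma> (- i) = - \<sigma> i" "\<sigma> 0 = 0"
proof -
  show p: "\<sigma> permutes SS n" "\<And>i. \<sigma> (- i) = - \<sigma> i" using assms unfolding signed_perms_def by auto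
  show "\<sigma> 0 = 0" using permutes_not_in[OF p(1)] by simp
qed

lemma phi_in_SW:
  assumes s: "\<sigma> \<in> signed_perms n"
  shows "map \<sigma> [1..int n] \<in> SW n"
proof -
  note F = sp_facts[OF s]
  have img: "\<bar>\<sigma> i\<bar> \<in> {1..int n}" if "i \<in> {1..int n}" for i
  proof -
    have "i \<in> SS n" using that by auto
    then have "\<sigma> i \<in> SS n" using permutes_in_image[OF F(1)] by simp
    then show ?thesis by auto
  qed
  have inj: "inj_on (abs \<circ> \<sigma>) {1..int n}"
  proof (rule inj_onI)
    fix i j assume ij: "i \<in> {1..int n}" "j \<in> {1..int n}" "(abs \<circ> \<sigma>) i = (abs \<circ> \<sigma>) j"
    then have "\<sigma> i = \<sigma> j \<or> \<sigma> i = \<sigma> (- j)" using F(2)[of j] by (auto simp: abs_if split: if_splits)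
    then have "i = j \<or> i = - j" using permutes_inj[OF F(1)] by (auto dest: injD)
    then show "i = j" using ij by auto
  qed
  have d: "distinct (map abs (map \<sigma> [1..int n]))"
    unfolding map_map distinct_map using inj upto_facts by simp
  have sub: "set (map abs (map \<sigma> [1..int n])) \<subseteq> {1..int n}" using img upto_facts(3) by auto
  have c: "card (set (map abs (map \<sigma> [1..int n]))) = card {1..int n}"
    using distinct_card[OF d] upto_facts(1) by simp
  have "set (map abs (map \<sigma> [1..int n])) = {1..int n}"
    using card_subset_eq[OF _ sub c] by simp
  moreover have "length (map \<sigma> [1..int n]) = n" using upto_facts(1) by simp
  ultimately show ?thesis unfolding SW_def using d by (intro CollectI conjI)
qed

lemma negB_phi:
  assumes s: "\<sigma> \<in> signed_perms n"
  shows "negB n \<sigma> = negL (map \<sigma> [1..int n])"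
proof -
  have "negL (map \<sigma> [1..int n]) = length (filter (\<lambda>i. \<sigma> i < 0) [1..int n])"
    unfolding negL_def filter_map by (simp add: comp_def)
  also have "\<dots> = card ({i. \<sigma> i < 0} \<inter> {1..int n})"
    using distinct_length_filter[OF upto_facts(4)] upto_facts(3) by simp
  also have "\<dots> = negB n \<sigma>" unfolding negB_def by (rule arg_cong[where f=card]) auto
  finally show ?thesis by simp
qed

lemma sum_if_card: "(\<Sum>j\<in>A. if P j then 1 else 0 :: nat) = card (A \<inter> {j. P j})" if "finite A"
proof -
  have "(\<Sum>j\<in>A. if P j then 1 else 0 :: nat) = (\<Sum>j\<in>A. of_bool (P j))" by (rule sum.cong) auto
  also have "\<dots> = card (A \<inter> {j. P j})" using that by simp
  finally show ?thesis .
qed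

lemma desB_phi:
  assumes s: "\<sigma> \<in> signed_perms n"
  shows "desB n \<sigma> = des0 0 (map \<sigma> [1..int n])"
proof -
  note F = sp_facts[OF s]
  let ?w = "map \<sigma> [1..int n]"
  have lw: "length ?w = n" using upto_facts(1) by simp
  have e1: "?w ! j = \<sigma> (int j + 1)" if "j < n" for j using that upto_facts by (simp add: add.commute)
  have e2: "(0 # ?w) ! j = \<sigma> (int j)" if "j < n" for j
  proof (cases j)
    case 0 then show ?thesis using F(3) by simp
  next
    case (Suc k) then show ?thesis using that e1[of k] by simp
  qed
  have "des0 0 ?w = card ({..<n} \<inter> {j. ?w ! j < (0 # ?w) ! j})"
    unfolding des0_sum lw by (rule sum_if_card) simp
  also have "{..<n} \<inter> {j. ?w ! j < (0 # ?w) ! j} = {j. j < n \<and> \<sigma> (int j + 1) < \<sigma> (int j)}"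
    using e1 e2 by auto
  also have "card \<dots> = card (int ` {j. j < n \<and> \<sigma> (int j + 1) < \<sigma> (int j)})"
    by (rule card_image[symmetric]) simp
  also have "int ` {j. j < n \<and> \<sigma> (int j + 1) < \<sigma> (int j)} = {i. 0 \<le> i \<and> i < int n \<and> \<sigma> i > \<sigma> (i + 1)}"
  proof (intro set_eqI iffI)
    fix i assume "i \<in> {i. 0 \<le> i \<and> i < int n \<and> \<sigma> i > \<sigma> (i + 1)}"
    then show "i \<in> int ` {j. j < n \<and> \<sigma> (int j + 1) < \<sigma> (int j)}"
      by (auto intro!: image_eqI[of _ _ "nat i"])
  qed auto
  finally show ?thesis unfolding desB_def by simp
qed

lemma phi_inj: "inj_on (\<lambda>\<sigma>. map \<sigma> [1..int n]) (signed_perms n)"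
proof (rule inj_onI)
  fix \<sigma> \<tau> assume s: "\<sigma> \<in> signed_perms n" and t: "\<tau> \<in> signed_perms n"
    and eq: "map \<sigma> [1..int n] = map \<tau> [1..int n]"
  note Fs = sp_facts[OF s] and Ft = sp_facts[OF t]
  have pos: "\<sigma> i = \<tau> i" if "i \<in> {1..int n}" for i
    using eq that upto_facts(3) by (metis map_eq_conv)
  show "\<sigma> = \<tau>"
  proof
    fix x
    show "\<sigma> x = \<tau> x"
    proof (cases "x \<in> SS n")
      case True
      show ?thesis
      proof (cases "x > 0")
        case True then show ?thesis using pos \<open>x \<in> SS n\<close> by auto
      next
        case False
        then have "- x \<in> {1..int n}" using \<open>x \<in> SS n\<close> by auto
        then have "\<sigma> (- x) = \<tau> (- x)" by (rule pos)
        then show ?thesis using Fs(2)[of x] Ft(2)[of x] by simp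
      qed
    next
      case False
      then show ?thesis using permutes_not_in[OF Fs(1)] permutes_not_in[OF Ft(1)] by simp
    qed
  qed
qed

lemma phi_surj:
  assumes w: "w \<in> SW n"
  shows "\<exists>\<sigma>\<in>signed_perms n. map \<sigma> [1..int n] = w"
proof -
  note W = SW_elem[OF w]
  define \<sigma> where "\<sigma> i = (if i \<in> SS n then sgn i * w ! nat (\<bar>i\<bar> - 1) else i)" for i
  have absw: "\<bar>w ! nat (\<bar>i\<bar> - 1)\<bar> \<in> {1..int n}" if "i \<in> SS n" for i
  proof -
    have k: "nat (\<bar>i\<bar> - 1) < length w" using that W(1) by auto
    then have "\<bar>w ! nat (\<bar>i\<bar> - 1)\<bar> \<in> set (map abs w)" by (metis length_map nth_map nth_mem)
    then show ?thesis using W(3) by simp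
  qed
  have abss: "\<bar>\<sigma> i\<bar> = \<bar>w ! nat (\<bar>i\<bar> - 1)\<bar>" if "i \<in> SS n" for i
    using that by (simp add: \<sigma>_def abs_mult abs_sgn_eq)
  have odd: "\<sigma> (- i) = - \<sigma> i" for i by (simp add: \<sigma>_def)
  have maps: "\<sigma> ` SS n \<subseteq> SS n"
  proof
    fix x assume "x \<in> \<sigma> ` SS n"
    then obtain i where i: "i \<in> SS n" "x = \<sigma> i" by auto
    then show "x \<in> SS n" using abss[OF i(1)] absw[OF i(1)] by auto
  qed
  have inj: "inj_on \<sigma> (SS n)"
  proof (rule inj_onI)
    fix i j assume ij: "i \<in> SS n" "j \<in> SS n" "\<sigma> i = \<sigma> j"
    have ki: "nat (\<bar>i\<bar> - 1) < length w" "nat (\<bar>j\<bar> - 1) < length w" using ij(1,2) W(1) by auto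
    have "map abs w ! nat (\<bar>i\<bar> - 1) = map abs w ! nat (\<bar>j\<bar> - 1)"
      using abss[OF ij(1)] abss[OF ij(2)] ij(3) by (simp add: ki)
    then have "nat (\<bar>i\<bar> - 1) = nat (\<bar>j\<bar> - 1)"
      using nth_eq_iff_index_eq[OF W(2)] ki by (metis length_map)
    then have aij: "\<bar>i\<bar> = \<bar>j\<bar>" using ij(1,2) eq_nat_nat_iff[of "\<bar>i\<bar> - 1" "\<bar>j\<bar> - 1"] by auto
    show "i = j"
    proof (rule ccontr)
      assume "i \<noteq> j"
      then have "i = - j" using aij by (auto simp: abs_if split: if_splits)
      then have "\<sigma> i = - \<sigma> i" using odd ij(3) by simp
      then have "\<sigma> i = 0" by simp
      then show False using abss[OF ij(1)] absw[OF ij(1)] by simp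
    qed
  qed
  have fin: "finite (SS n)" by (rule finite_subset[of _ "{- int n..int n}"]) auto
  have "\<sigma> ` SS n = SS n" using endo_inj_surj[OF fin maps inj] .
  then have bij: "bij_betw \<sigma> (SS n) (SS n)" using inj by (simp add: bij_betw_def)
  have perm: "\<sigma> permutes SS n"
    by (rule bij_imp_permutes[OF bij]) (auto simp: \<sigma>_def)
  have sp: "\<sigma> \<in> signed_perms n" unfolding signed_perms_def using perm odd by simp
  have "map \<sigma> [1..int n] = w"
  proof (rule nth_equalityI)
    show "length (map \<sigma> [1..int n]) = length w" using W(1) upto_facts(1) by simp
    fix k assume "k < length (map \<sigma> [1..int n])"
    then have k: "k < n" using upto_facts(1) by simp
    then show "map \<sigma> [1..int n] ! k = w ! k"
      using upto_facts(1,2) by (simp add: \<sigma>_def)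
  qed
  then show ?thesis using sp by blast
qed

lemma Bpoly_SW: "Bpoly n y t = (\<Sum>w\<in>SW n. y ^ negL w * t ^ des0 0 w)"
proof -
  have bij: "bij_betw (\<lambda>\<sigma>. map \<sigma> [1..int n]) (signed_perms n) (SW n)"
    unfolding bij_betw_def using phi_inj phi_in_SW phi_surj by blast
  have "(\<Sum>w\<in>SW n. y ^ negL w * t ^ des0 0 w) = (\<Sum>\<sigma>\<in>signed_perms n. y ^ negL (map \<sigma> [1..int n]) * t ^ des0 0 (map \<sigma> [1..int n]))"
    using sum.reindex_bij_betw[OF bij, of "\<lambda>w. y ^ negL w * t ^ des0 0 w"] by simp
  also have "\<dots> = Bpoly n y t" unfolding Bpoly_def
    by (rule sum.cong[OF refl]) (simp add: negB_phi desB_phi)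
  finally show ?thesis by simp
qed

definition BL :: "nat \<Rightarrow> real \<Rightarrow> real \<Rightarrow> real" where
  "BL n y t = (\<Sum>w\<in>SW n. y ^ negL w * t ^ des0 0 w)"

lemma B_rec:
  fixes y t :: real
  shows "BL (Suc n) y t = (\<Sum>w\<in>SW n. y ^ negL w * t ^ des0 0 w *
      (1 + y * t + (1 + y) * (n * t + des0 0 w * (1 - t))))"
proof -
  have "BL (Suc n) y t = (\<Sum>w\<in>SW n. \<Sum>j\<in>{0..n}. y ^ negL (insL j (int (Suc n)) w) * t ^ des0 0 (insL j (int (Suc n)) w)
      + y ^ negL (insL j (- int (Suc n)) w) * t ^ des0 0 (insL j (- int (Suc n)) w))"
    unfolding BL_def by (rule SW_sum)
  also have "\<dots> = (\<Sum>w\<in>SW n. y ^ negL w * t ^ des0 0 w *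
      (1 + y * t + (1 + y) * (n * t + des0 0 w * (1 - t))))"
  proof (rule sum.cong[OF refl])
    fix w assume w: "w \<in> SW n"
    note W = SW_elem[OF w]
    have b: "\<forall>x\<in>set w. \<bar>x\<bar> < int (Suc n)" using W(4) by blast
    have pos: "0 < int (Suc n)" by simp
    have s1: "(\<Sum>j\<in>{0..n}. t ^ des0 0 (insL j (int (Suc n)) w)) = t ^ des0 0 w * (n * t + des0 0 w * (1 - t) + 1)"
      using slot_sum(1)[OF b pos, of t] W(1) by simp
    have s2: "(\<Sum>j\<in>{0..n}. t ^ des0 0 (insL j (- int (Suc n)) w)) = t ^ des0 0 w * (n * t + des0 0 w * (1 - t) + t)"
      using slot_sum(2)[OF b pos, of t] W(1) by simp
    have "(\<Sum>j\<in>{0..n}. y ^ negL (insL j (int (Suc n)) w) * t ^ des0 0 (insL j (int (Suc n)) w)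
      + y ^ negL (insL j (- int (Suc n)) w) * t ^ des0 0 (insL j (- int (Suc n)) w))
      = y ^ negL w * (\<Sum>j\<in>{0..length w}. t ^ des0 0 (insL j (int (Suc n)) w))
        + y ^ Suc (negL w) * (\<Sum>j\<in>{0..length w}. t ^ des0 0 (insL j (- int (Suc n)) w))"
      by (simp add: negL_insL W(1) sum.distrib sum_distrib_left)
    also have "\<dots> = y ^ negL w * t ^ des0 0 w *
      (1 + y * t + (1 + y) * (n * t + des0 0 w * (1 - t)))"
      unfolding W(1) s1 s2 by (simp add: algebra_simps)
    finally show "(\<Sum>j\<in>{0..n}. y ^ negL (insL j (int (Suc n)) w) * t ^ des0 0 (insL j (int (Suc n)) w)
      + y ^ negL (insL j (- int (Suc n)) w) * t ^ des0 0 (insL j (- int (Suc n)) w)) = \<dots>" .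
  qed
  finally show ?thesis .
qed

definition aa :: "real \<Rightarrow> real \<Rightarrow> real" where
  "aa y t = (1 + y)\<^sup>2 * t / ((y + t) * (1 + y * t))"
definition bb :: "real \<Rightarrow> real \<Rightarrow> real" where
  "bb y t = (y + t) / (1 + y * t)"
definition da :: "real \<Rightarrow> real \<Rightarrow> real" where
  "da y t = ((1 + y)\<^sup>2 * ((y + t) * (1 + y * t)) - (1 + y)\<^sup>2 * t * ((1 + y * t) + y * (y + t)))
     / (((y + t) * (1 + y * t)) * ((y + t) * (1 + y * t)))"
definition db :: "real \<Rightarrow> real \<Rightarrow> real" where
  "db y t = ((1 + y * t) - (y + t) * y) / ((1 + y * t) * (1 + y * t))"

lemma aa_deriv:
  assumes "y + t \<noteq> 0" "1 + y * t \<noteq> 0"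
  shows "((\<lambda>t. aa y t) has_field_derivative da y t) (at t)"
  unfolding aa_def da_def
  apply (rule derivative_eq_intros refl | use assms in simp)+
  done

lemma bb_deriv:
  assumes "1 + y * t \<noteq> 0"
  shows "((\<lambda>t. bb y t) has_field_derivative db y t) (at t)"
  unfolding bb_def db_def
  apply (rule derivative_eq_intros refl | use assms in simp)+
  done

lemma H_abs:
  fixes y t C D :: real
  assumes hC: "C = 1 + y * t" and hD: "D = y + t" and C: "C \<noteq> 0" and D: "D \<noteq> 0"
  shows "(1 + y) * (1 - t) * t * (((1 + y)\<^sup>2 * (D * C) - (1 + y)\<^sup>2 * t * (C + y * D)) / ((D * C) * (D * C)))
      = C * (1 - (1 + y)\<^sup>2 * t / (D * C)) * (1 + D / C) * ((1 + y)\<^sup>2 * t / (D * C))"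
    and "(1 + y) * (1 - t) * t * ((C - D * y) / (C * C))
      = C * ((1 + y)\<^sup>2 * t / (D * C)) * (1 - D / C) * (D / C)"
    and "C\<^sup>2 * ((1 + y)\<^sup>2 * t / (D * C)) * (D / C) = (1 + y)\<^sup>2 * t"
proof -
  have e1: "1 - (1 + y)\<^sup>2 * t / (D * C) = y * (1 - t)\<^sup>2 / (D * C)"
  proof -
    have "D * C - (1 + y)\<^sup>2 * t = y * (1 - t)\<^sup>2" unfolding hC hD by algebra
    moreover have "1 - (1 + y)\<^sup>2 * t / (D * C) = (D * C - (1 + y)\<^sup>2 * t) / (D * C)"
      using C D by (simp add: diff_divide_distrib)
    ultimately show ?thesis by simp
  qed
  have e2: "1 + D / C = (1 + y) * (1 + t) / C"
  proof -
    have "C + D = (1 + y) * (1 + t)" unfolding hC hD by algebra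
    moreover have "1 + D / C = (C + D) / C" using C by (simp add: add_divide_distrib)
    ultimately show ?thesis by simp
  qed
  have e3: "1 - D / C = (1 - y) * (1 - t) / C"
  proof -
    have "C - D = (1 - y) * (1 - t)" unfolding hC hD by algebra
    moreover have "1 - D / C = (C - D) / C" using C by (simp add: diff_divide_distrib)
    ultimately show ?thesis by simp
  qed
  have e4: "(1 + y)\<^sup>2 * (D * C) - (1 + y)\<^sup>2 * t * (C + y * D) = (1 + y)\<^sup>2 * y * (1 - t) * (1 + t)"
    unfolding hC hD by algebra
  have e5: "C - D * y = (1 - y) * (1 + y)" unfolding hC hD by algebra
  show "(1 + y) * (1 - t) * t * (((1 + y)\<^sup>2 * (D * C) - (1 + y)\<^sup>2 * t * (C + y * D)) / ((D * C) * (D * C)))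
      = C * (1 - (1 + y)\<^sup>2 * t / (D * C)) * (1 + D / C) * ((1 + y)\<^sup>2 * t / (D * C))"
    unfolding e1 e2 e4 using C D by (simp add: field_simps power2_eq_square)
  show "(1 + y) * (1 - t) * t * ((C - D * y) / (C * C))
      = C * ((1 + y)\<^sup>2 * t / (D * C)) * (1 - D / C) * (D / C)"
    unfolding e3 e5 using C D by (simp add: field_simps power2_eq_square)
  show "C\<^sup>2 * ((1 + y)\<^sup>2 * t / (D * C)) * (D / C) = (1 + y)\<^sup>2 * t"
    using C D by (simp add: field_simps power2_eq_square)
qed

lemma H123:
  assumes "y + t \<noteq> 0" "1 + y * t \<noteq> 0"
  shows "(1 + y) * (1 - t) * t * da y t = (1 + y * t) * (1 - aa y t) * (1 + bb y t) * aa y t"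
    "(1 + y) * (1 - t) * t * db y t = (1 + y * t) * aa y t * (1 - bb y t) * bb y t"
    "(1 + y * t)\<^sup>2 * aa y t * bb y t = (1 + y)\<^sup>2 * t"
  unfolding aa_def bb_def da_def db_def
  by (rule H_abs(1)[OF refl refl assms(2,1)], rule H_abs(2)[OF refl refl assms(2,1)],
      rule H_abs(3)[OF refl refl assms(2,1)])

lemma key_alg:
  fixes C a b y t da db :: real and n c e :: nat
  assumes H1: "(1 + y) * (1 - t) * t * da = C * (1 - a) * (1 + b) * a"
    and H2: "(1 + y) * (1 - t) * t * db = C * a * (1 - b) * b"
    and H3: "C\<^sup>2 * a * b = (1 + y)\<^sup>2 * t"
    and hC: "C = 1 + y * t"
  shows "(C + (1 + y) * n * t) * (C ^ n * a ^ c * b ^ e) + (1 + y) * (1 - t) * t *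
      ((of_nat n * (y * C ^ (n - Suc 0)) * a ^ c + of_nat c * (da * a ^ (c - Suc 0)) * C ^ n) * b ^ e
        + of_nat e * (db * b ^ (e - Suc 0)) * (C ^ n * a ^ c))
    = C ^ Suc n * a ^ c * b ^ e * (1 + n * a * b + c * (1 - a) * (1 + b) + e * a * (1 - b))"
proof -
  define K where "K = (1 + y) * (1 - t) * t"
  have Tc: "K * (of_nat c * (da * a ^ (c - Suc 0)) * C ^ n * b ^ e) = C ^ Suc n * a ^ c * b ^ e * (c * (1 - a) * (1 + b))"
  proof (cases c)
    case 0 then show ?thesis by simp
  next
    case (Suc m)
    have "K * (of_nat c * (da * a ^ (c - Suc 0)) * C ^ n * b ^ e) = (of_nat c * a ^ m * C ^ n * b ^ e) * (K * da)"
      using Suc by (simp add: mult_ac)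
    also have "\<dots> = (of_nat c * a ^ m * C ^ n * b ^ e) * (C * (1 - a) * (1 + b) * a)" using H1 K_def by simp
    also have "\<dots> = C ^ Suc n * a ^ c * b ^ e * (c * (1 - a) * (1 + b))" using Suc by (simp add: mult_ac)
    finally show ?thesis .
  qed
  have Te: "K * (of_nat e * (db * b ^ (e - Suc 0)) * (C ^ n * a ^ c)) = C ^ Suc n * a ^ c * b ^ e * (e * a * (1 - b))"
  proof (cases e)
    case 0 then show ?thesis by simp
  next
    case (Suc m)
    have "K * (of_nat e * (db * b ^ (e - Suc 0)) * (C ^ n * a ^ c)) = (of_nat e * b ^ m * C ^ n * a ^ c) * (K * db)"
      using Suc by (simp add: mult_ac)
    also have "\<dots> = (of_nat e * b ^ m * C ^ n * a ^ c) * (C * a * (1 - b) * b)" using H2 K_def by simp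
    also have "\<dots> = C ^ Suc n * a ^ c * b ^ e * (e * a * (1 - b))" using Suc by (simp add: mult_ac)
    finally show ?thesis .
  qed
  have Tn: "(C + (1 + y) * n * t) * (C ^ n * a ^ c * b ^ e) + K * (of_nat n * (y * C ^ (n - Suc 0)) * a ^ c * b ^ e)
      = C ^ Suc n * a ^ c * b ^ e * (1 + n * a * b)"
  proof (cases n)
    case 0 then show ?thesis by simp
  next
    case (Suc m)
    have h: "C ^ Suc (Suc m) * a * b = C ^ m * ((1 + y)\<^sup>2 * t)"
    proof -
      have "C ^ Suc (Suc m) * a * b = C ^ m * (C\<^sup>2 * a * b)" by (simp add: power2_eq_square mult_ac)
      then show ?thesis using H3 by simp
    qed
    have "(C + (1 + y) * n * t) * (C ^ n * a ^ c * b ^ e) + K * (of_nat n * (y * C ^ (n - Suc 0)) * a ^ c * b ^ e)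
        - C ^ Suc n * a ^ c * b ^ e * (1 + n * a * b)
      = (of_nat n * a ^ c * b ^ e) * (C ^ m * ((1 + y) * t * C + K * y) - C ^ Suc (Suc m) * a * b)"
      using Suc by (simp add: algebra_simps)
    also have "\<dots> = (of_nat n * a ^ c * b ^ e) * (C ^ m * ((1 + y) * t * C + K * y - (1 + y)\<^sup>2 * t))"
      unfolding h by (simp add: algebra_simps)
    also have "(1 + y) * t * C + K * y - (1 + y)\<^sup>2 * t = 0"
      unfolding K_def hC by (simp add: algebra_simps power2_eq_square)
    finally show ?thesis by simp
  qed
  show ?thesis
    using Tc Te Tn unfolding K_def by (simp add: algebra_simps)
qed

lemma sqrt_poly1:
  fixes y t s :: real
  assumes "s\<^sup>2 = (1 + t)\<^sup>2 - 4 * y * t"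
  shows "(1 + t\<^sup>2 - 2 * y * t - (1 - t) * s) * (2 * y * t) + ((1 + t)\<^sup>2 - 2 * y * t - (1 + t) * s) * (2 * (1 - y) * t)
    = t * ((2 * (1 - y) * t) * (2 * y * t) + (1 + t\<^sup>2 - 2 * y * t - (1 - t) * s) * ((1 + t)\<^sup>2 - 2 * y * t - (1 + t) * s))"
  using assms by algebra

lemma sqrt_poly2:
  fixes y t s :: real
  assumes "s\<^sup>2 = (1 + t)\<^sup>2 - 4 * y * t"
  shows "(2 * (1 - y) * t + (1 + t\<^sup>2 - 2 * y * t - (1 - t) * s))\<^sup>2 * ((1 + t)\<^sup>2 - 2 * y * t - (1 + t) * s) * (2 * y * t)
    = y * ((1 + t\<^sup>2 - 2 * y * t - (1 - t) * s) * (2 * y * t) + ((1 + t)\<^sup>2 - 2 * y * t - (1 + t) * s) * (2 * (1 - y) * t))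
      * ((2 * (1 - y) * t) * (2 * y * t) + (1 + t\<^sup>2 - 2 * y * t - (1 - t) * s) * ((1 + t)\<^sup>2 - 2 * y * t - (1 + t) * s))"
  using assms by algebra

lemma SW0: "SW 0 = {[]}" unfolding SW_def by auto

lemma BL0: "BL 0 y t = 1" unfolding BL_def SW0 by (simp add: negL_def)

lemma P0: "P_cpk_exc 0 a b = 1"
proof -
  have "{\<sigma>. \<sigma> permutes {1..(0::nat)}} = {id}" by (simp add: permutes_empty)
  moreover have "cpk 0 id = 0" "exc 0 id = 0" unfolding cpk_def exc_def by auto
  ultimately show ?thesis unfolding P_cpk_exc_def by simp
qed

definition GG :: "nat \<Rightarrow> real \<Rightarrow> real \<Rightarrow> real" where
  "GG n y t = (1 + y * t) ^ n * P_cpk_exc n (aa y t) (bb y t)"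

lemma GG_sum: "GG n y s = (\<Sum>q\<in>{q. q permutes {1..n}}. (1 + y * s) ^ n * aa y s ^ cpk n q * bb y s ^ exc n q)"
  unfolding GG_def P_cpk_exc_def sum_distrib_left by (simp add: mult_ac)

lemma BL_deriv:
  "((\<lambda>s. BL n y s) has_field_derivative (\<Sum>w\<in>SW n. y ^ negL w * (of_nat (des0 0 w) * t ^ (des0 0 w - Suc 0)))) (at t)"
  unfolding BL_def
  by (rule DERIV_sum) (rule DERIV_cmult[OF DERIV_pow])

lemma GG_deriv:
  assumes "y + t \<noteq> 0" "1 + y * t \<noteq> 0"
  shows "((\<lambda>s. GG n y s) has_field_derivative (\<Sum>q\<in>{q. q permutes {1..n}}.
     (of_nat n * (y * (1 + y * t) ^ (n - Suc 0)) * aa y t ^ cpk n q + of_nat (cpk n q) * (da y t * aa y t ^ (cpk n q - Suc 0)) * (1 + y * t) ^ n) * bb y t ^ exc n q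
        + of_nat (exc n q) * (db y t * bb y t ^ (exc n q - Suc 0)) * ((1 + y * t) ^ n * aa y t ^ cpk n q))) (at t)"
proof -
  have dC: "((\<lambda>s. 1 + y * s) has_field_derivative y) (at t)"
    by (auto intro!: derivative_eq_intros)
  show ?thesis
    unfolding GG_sum
    by (rule DERIV_sum) (rule DERIV_mult[OF DERIV_mult[OF DERIV_power[OF dC] DERIV_power[OF aa_deriv[OF assms]]] DERIV_power[OF bb_deriv[OF assms(2)]]])
qed

lemma main_eq: "\<forall>y t. y + t \<noteq> 0 \<longrightarrow> 1 + y * t \<noteq> 0 \<longrightarrow> BL n y t = GG n y t"
proof (induction n)
  case 0
  then show ?case by (simp add: BL0 GG_def P0)
next
  case (Suc n)
  show ?case
  proof (intro allI impI)
    fix y t :: real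
    assume yt: "y + t \<noteq> 0" "1 + y * t \<noteq> 0"
    define U where "U = {s. y + s \<noteq> 0} \<inter> {s. 1 + y * s \<noteq> 0}"
    have oU: "open U" unfolding U_def
      by (intro open_Int open_Collect_neq continuous_intros)
    have tU: "t \<in> U" using yt by (simp add: U_def)
    have eqU: "\<And>s. s \<in> U \<Longrightarrow> BL n y s = GG n y s" using Suc.IH by (simp add: U_def)
    define DB where "DB = (\<Sum>w\<in>SW n. y ^ negL w * (of_nat (des0 0 w) * t ^ (des0 0 w - Suc 0)))"
    define DG where "DG = (\<Sum>q\<in>{q. q permutes {1..n}}.
     (of_nat n * (y * (1 + y * t) ^ (n - Suc 0)) * aa y t ^ cpk n q + of_nat (cpk n q) * (da y t * aa y t ^ (cpk n q - Suc 0)) * (1 + y * t) ^ n) * bb y t ^ exc n q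
        + of_nat (exc n q) * (db y t * bb y t ^ (exc n q - Suc 0)) * ((1 + y * t) ^ n * aa y t ^ cpk n q))"
    have d1: "((\<lambda>s. GG n y s) has_field_derivative DB) (at t)"
      using has_field_derivative_transform_within_open[OF BL_deriv[of n y t] oU tU eqU] unfolding DB_def .
    have d2: "((\<lambda>s. GG n y s) has_field_derivative DG) (at t)"
      using GG_deriv[OF yt, of n] unfolding DG_def .
    have DBG: "DB = DG" using DERIV_unique[OF d1 d2] .
    have "BL (Suc n) y t = (\<Sum>w\<in>SW n. y ^ negL w * t ^ des0 0 w *
      (1 + y * t + (1 + y) * (n * t + des0 0 w * (1 - t))))" by (rule B_rec)
    also have "\<dots> = (\<Sum>w\<in>SW n. (1 + y * t + (1 + y) * n * t) * (y ^ negL w * t ^ des0 0 w)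
       + (1 + y) * (1 - t) * t * (y ^ negL w * (of_nat (des0 0 w) * t ^ (des0 0 w - Suc 0))))"
    proof (rule sum.cong[OF refl])
      fix w
      have key: "t * (of_nat (des0 0 w) * t ^ (des0 0 w - Suc 0)) = of_nat (des0 0 w) * t ^ des0 0 w"
        by (cases "des0 0 w") auto
      have e1: "(1 + y) * (1 - t) * t * (y ^ negL w * (of_nat (des0 0 w) * t ^ (des0 0 w - Suc 0)))
         = ((1 + y) * (1 - t) * y ^ negL w) * (t * (of_nat (des0 0 w) * t ^ (des0 0 w - Suc 0)))"
        by (simp only: mult_ac)
      then show "y ^ negL w * t ^ des0 0 w * (1 + y * t + (1 + y) * (n * t + des0 0 w * (1 - t)))
         = (1 + y * t + (1 + y) * n * t) * (y ^ negL w * t ^ des0 0 w)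
       + (1 + y) * (1 - t) * t * (y ^ negL w * (of_nat (des0 0 w) * t ^ (des0 0 w - Suc 0)))"
        unfolding e1 key by (simp add: algebra_simps)
    qed
    also have "\<dots> = (1 + y * t + (1 + y) * n * t) * BL n y t + (1 + y) * (1 - t) * t * DB"
      unfolding BL_def DB_def by (simp add: sum.distrib sum_distrib_left)
    also have "\<dots> = (1 + y * t + (1 + y) * n * t) * GG n y t + (1 + y) * (1 - t) * t * DG"
      using eqU[OF tU] DBG by simp
    also have "\<dots> = (\<Sum>q\<in>{q. q permutes {1..n}}.
        (1 + y * t + (1 + y) * n * t) * ((1 + y * t) ^ n * aa y t ^ cpk n q * bb y t ^ exc n q)
        + (1 + y) * (1 - t) * t * ((of_nat n * (y * (1 + y * t) ^ (n - Suc 0)) * aa y t ^ cpk n q + of_nat (cpk n q) * (da y t * aa y t ^ (cpk n q - Suc 0)) * (1 + y * t) ^ n) * bb y t ^ exc n q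
        + of_nat (exc n q) * (db y t * bb y t ^ (exc n q - Suc 0)) * ((1 + y * t) ^ n * aa y t ^ cpk n q)))"
      unfolding GG_sum DG_def sum_distrib_left by (rule sum.distrib[symmetric])
    also have "\<dots> = (\<Sum>q\<in>{q. q permutes {1..n}}. (1 + y * t) ^ Suc n * aa y t ^ cpk n q * bb y t ^ exc n q *
        (1 + n * aa y t * bb y t + cpk n q * (1 - aa y t) * (1 + bb y t) + exc n q * aa y t * (1 - bb y t)))"
      by (rule sum.cong[OF refl], rule key_alg[OF H123[OF yt] refl])
    also have "\<dots> = GG (Suc n) y t"
      unfolding GG_def P_rec sum_distrib_left by (simp add: mult_ac)
    finally show "BL (Suc n) y t = GG (Suc n) y t" .
  qed
qed

lemma Bpoly_GG:
  assumes "y + t \<noteq> 0" "1 + y * t \<noteq> 0"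
  shows "Bpoly n y t = (1 + y * t) ^ n * P_cpk_exc n ((1 + y)\<^sup>2 * t / ((y + t) * (1 + y * t))) ((y + t) / (1 + y * t))"
  using main_eq[of n] assms unfolding Bpoly_SW BL_def[symmetric] GG_def aa_def bb_def by blast

lemma part2:
  fixes y t :: real
  assumes y0: "y \<noteq> 0" and y1: "y \<noteq> 1" and t0: "t \<noteq> 0" and D: "(1 + t)\<^sup>2 - 4 * y * t \<ge> 0"
  defines "u \<equiv> (1 + t\<^sup>2 - 2 * y * t - (1 - t) * sqrt ((1 + t)\<^sup>2 - 4 * y * t)) / (2 * (1 - y) * t)"
    and "v \<equiv> ((1 + t)\<^sup>2 - 2 * y * t - (1 + t) * sqrt ((1 + t)\<^sup>2 - 4 * y * t)) / (2 * y * t)"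
  assumes uv: "1 + u * v \<noteq> 0"
  shows "P_cpk_exc n y t = Bpoly n u v / (1 + u * v) ^ n"
proof -
  define s where "s = sqrt ((1 + t)\<^sup>2 - 4 * y * t)"
  have s2: "s\<^sup>2 = (1 + t)\<^sup>2 - 4 * y * t" unfolding s_def using D by simp
  define U where "U = 1 + t\<^sup>2 - 2 * y * t - (1 - t) * s"
  define V where "V = (1 + t)\<^sup>2 - 2 * y * t - (1 + t) * s"
  define \<alpha> where "\<alpha> = 2 * (1 - y) * t"
  define \<beta> where "\<beta> = 2 * y * t"
  have a0: "\<alpha> \<noteq> 0" using y1 t0 by (simp add: \<alpha>_def)
  have b0: "\<beta> \<noteq> 0" using y0 t0 by (simp add: \<beta>_def)
  have ue: "u = U / \<alpha>" unfolding u_def U_def \<alpha>_def s_def ..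
  have ve: "v = V / \<beta>" unfolding v_def V_def \<beta>_def s_def ..
  have p1: "U * \<beta> + V * \<alpha> = t * (\<alpha> * \<beta> + U * V)"
    using sqrt_poly1[OF s2] unfolding U_def V_def \<alpha>_def \<beta>_def .
  have p2: "(\<alpha> + U)\<^sup>2 * V * \<beta> = y * (U * \<beta> + V * \<alpha>) * (\<alpha> * \<beta> + U * V)"
    using sqrt_poly2[OF s2] unfolding U_def V_def \<alpha>_def \<beta>_def .
  have sum_uv: "u + v = (U * \<beta> + V * \<alpha>) / (\<alpha> * \<beta>)" unfolding ue ve using a0 b0 by (simp add: field_simps)
  have prod_uv: "1 + u * v = (\<alpha> * \<beta> + U * V) / (\<alpha> * \<beta>)" unfolding ue ve using a0 b0 by (simp add: field_simps)
  have I1: "u + v = t * (1 + u * v)" unfolding sum_uv prod_uv p1 by simp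
  have I2: "(1 + u)\<^sup>2 * v = y * (u + v) * (1 + u * v)"
  proof -
    have "(1 + u)\<^sup>2 * v = ((\<alpha> + U)\<^sup>2 * V * \<beta>) / ((\<alpha> * \<beta>) * (\<alpha> * \<beta>))"
      unfolding ue ve using a0 b0 by (simp add: field_simps power2_eq_square)
    also have "\<dots> = y * (u + v) * (1 + u * v)"
      unfolding p2 sum_uv prod_uv by simp
    finally show ?thesis .
  qed
  have uv0: "u + v \<noteq> 0" using I1 t0 uv by simp
  have ea: "(1 + u)\<^sup>2 * v / ((u + v) * (1 + u * v)) = y"
  proof -
    have "(1 + u)\<^sup>2 * v / ((u + v) * (1 + u * v)) = y * ((u + v) * (1 + u * v)) / ((u + v) * (1 + u * v))"
      unfolding I2 by (simp add: mult.assoc)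
    also have "\<dots> = y" using uv0 uv by simp
    finally show ?thesis .
  qed
  have eb: "(u + v) / (1 + u * v) = t" using I1 uv by (simp add: field_simps)
  have "Bpoly n u v = (1 + u * v) ^ n * P_cpk_exc n y t"
    using Bpoly_GG[OF uv0 uv, of n] unfolding ea eb .
  then show ?thesis using uv by simp
qed

theorem theorem3p16:
  fixes n :: nat
  assumes "n \<ge> 1"
  shows "(\<forall>y t :: real. y + t \<noteq> 0 \<longrightarrow> 1 + y * t \<noteq> 0 \<longrightarrow>
            Bpoly n y t = (1 + y * t) ^ n *
              P_cpk_exc n ((1 + y)\<^sup>2 * t / ((y + t) * (1 + y * t))) ((y + t) / (1 + y * t)))
       \<and> (\<forall>y t :: real. y \<noteq> 0 \<longrightarrow> y \<noteq> 1 \<longrightarrow> t \<noteq> 0 \<longrightarrow> (1 + t)\<^sup>2 - 4 * y * t \<ge> 0 \<longrightarrow>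
            (let u = (1 + t\<^sup>2 - 2 * y * t - (1 - t) * sqrt ((1 + t)\<^sup>2 - 4 * y * t)) / (2 * (1 - y) * t);
                 v = ((1 + t)\<^sup>2 - 2 * y * t - (1 + t) * sqrt ((1 + t)\<^sup>2 - 4 * y * t)) / (2 * y * t)
             in 1 + u * v \<noteq> 0 \<longrightarrow> P_cpk_exc n y t = Bpoly n u v / (1 + u * v) ^ n))"
proof (intro conjI allI impI)
  fix y t :: real
  assume "y + t \<noteq> 0" "1 + y * t \<noteq> 0"
  then show "Bpoly n y t = (1 + y * t) ^ n *
              P_cpk_exc n ((1 + y)\<^sup>2 * t / ((y + t) * (1 + y * t))) ((y + t) / (1 + y * t))"
    by (rule Bpoly_GG)
next
  fix y t :: real
  assume h: "y \<noteq> 0" "y \<noteq> 1" "t \<noteq> 0" "(1 + t)\<^sup>2 - 4 * y * t \<ge> 0"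
  show "let u = (1 + t\<^sup>2 - 2 * y * t - (1 - t) * sqrt ((1 + t)\<^sup>2 - 4 * y * t)) / (2 * (1 - y) * t);
                 v = ((1 + t)\<^sup>2 - 2 * y * t - (1 + t) * sqrt ((1 + t)\<^sup>2 - 4 * y * t)) / (2 * y * t)
             in 1 + u * v \<noteq> 0 \<longrightarrow> P_cpk_exc n y t = Bpoly n u v / (1 + u * v) ^ n"
    unfolding Let_def using part2[OF h] by blast
qed

end
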